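(* Let $c\in\mathbb{N}$ and $I=\mathbb{N}\times[c]$. Then every $\mathrm{Sym}$-invariant lattice $L\subseteq\mathbb{Z}^{(I)}$ has (i) a finite equivariant universal Gröbner basis, (ii) a finite equivariant Gröbner basis with respect to an arbitrary term order on $\mathbb{Z}_{\ge0}^{(I)}$, (iii) a finite equivariant Markov basis, and (iv) a finite equivariant generating set.
   Context: $\mathbb{N}=\{1,2,\dots\}$. $\mathbb{Z}^{(I)}$ is the free abelian group with basis $I$ (standard basis $\mathbf{e}_{i,j}$), $\mathbb{Z}_{\ge0}^{(I)}$ its nonnegative vectors; a lattice is a subgroup. $\mathrm{Sym}$ is the group of permutations of $\mathbb{N}$ fixing all but finitely many points, acting by linear extension of $\sigma(\mathbf{e}_{i,j})=\mathbf{e}_{\sigma(i),j}$. Term order: additive well-ordering of $\mathbb{Z}_{\ge0}^{(I)}$. For $\mathbf{u}\in\mathbb{Z}_{\ge0}^{(I)}$, $F_L(\mathbf{u})=\{\mathbf{v}\ge\mathbf{0}\mid\mathbf{u}-\mathbf{v}\in L\}$. For $\mathcal{B}\subseteq L$: generating set = generates $L$ as a group; Markov basis = for all $\mathbf{u}$, the graph on $F_L(\mathbf{u})$ with edges $\{\mathbf{v},\mathbf{w}\}$ for $\mathbf{v}-\mathbf{w}\in\pm\mathcal{B}$ is connected; Gröbner basis w.r.t. $\prec$ = for all $\mathbf{u}$ there is a directed path from $\mathbf{u}$ to the $\prec$-minimal element of $F_L(\mathbf{u})$ along edges $\mathbf{v}\to\mathbf{w}$ with $\mathbf{v}-\mathbf{w}\in\pm\mathcal{B}$,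 $\mathbf{w}\prec\mathbf{v}$; universal Gröbner basis = Gröbner basis w.r.t. all term orders. $\mathcal{B}$ is an equivariant X (for each of these notions) if $\mathrm{Sym}(\mathcal{B})=\{\sigma(\mathbf{b})\mid\sigma\in\mathrm{Sym},\mathbf{b}\in\mathcal{B}\}$ is an X. *)

theory Defs
  imports Main "HOL-Library.Function_Algebras" "HOL-Combinatorics.Permutations"
begin

text \<open>Vectors of Z^(I) are represented as functions nat \<times> nat \<Rightarrow> int with finite support
  contained in I = {1,2,...} \<times> {1..c}.  Group operations are pointwise.\<close>

type_synonym vec = "nat \<times> nat \<Rightarrow> int"

definition index_set :: "nat \<Rightarrow> (nat \<times> nat) set" where
  "index_set c = {1..} \<times> {1..c}"

definition ZI :: "nat \<Rightarrow> vec set" where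
  "ZI c = {v. finite {x. v x \<noteq> 0} \<and> (\<forall>x. v x \<noteq> 0 \<longrightarrow> x \<in> index_set c)}"

definition ZI_nonneg :: "nat \<Rightarrow> vec set" where
  "ZI_nonneg c = {v \<in> ZI c. \<forall>x. 0 \<le> v x}"

definition is_subgroup :: "vec set \<Rightarrow> bool" where
  "is_subgroup H \<longleftrightarrow> 0 \<in> H \<and> (\<forall>a\<in>H. \<forall>b\<in>H. a - b \<in> H)"

definition is_lattice :: "nat \<Rightarrow> vec set \<Rightarrow> bool" where
  "is_lattice c L \<longleftrightarrow> L \<subseteq> ZI c \<and> is_subgroup L"

definition gen_subgroup :: "vec set \<Rightarrow> vec set" where
  "gen_subgroup B = \<Inter> {H. is_subgroup H \<and> B \<subseteq> H}"

definition Sym :: "(nat \<Rightarrow> nat) set" where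
  "Sym = {\<sigma>. \<sigma> permutes {1..} \<and> finite {i. \<sigma> i \<noteq> i}}"

text \<open>sigma(e_(i,j)) = e_(sigma i, j), extended linearly.\<close>
definition act :: "(nat \<Rightarrow> nat) \<Rightarrow> vec \<Rightarrow> vec" where
  "act \<sigma> v = (\<lambda>(k, j). v (inv \<sigma> k, j))"

definition sym_invariant :: "vec set \<Rightarrow> bool" where
  "sym_invariant L \<longleftrightarrow> (\<forall>\<sigma>\<in>Sym. \<forall>v\<in>L. act \<sigma> v \<in> L)"

definition sym_orbit :: "vec set \<Rightarrow> vec set" where
  "sym_orbit B = {act \<sigma> b | \<sigma> b. \<sigma> \<in> Sym \<and> b \<in> B}"

definition term_order :: "nat \<Rightarrow> (vec \<Rightarrow> vec \<Rightarrow> bool) \<Rightarrow> bool" where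
  "term_order c lt \<longleftrightarrow>
     (\<forall>u v. lt u v \<longrightarrow> u \<in> ZI_nonneg c \<and> v \<in> ZI_nonneg c) \<and>
     (\<forall>u. \<not> lt u u) \<and>
     (\<forall>u v w. lt u v \<longrightarrow> lt v w \<longrightarrow> lt u w) \<and>
     (\<forall>u\<in>ZI_nonneg c. \<forall>v\<in>ZI_nonneg c. u \<noteq> v \<longrightarrow> lt u v \<or> lt v u) \<and>
     wfP lt \<and>
     (\<forall>u\<in>ZI_nonneg c. \<forall>v\<in>ZI_nonneg c. \<forall>w\<in>ZI_nonneg c. lt u v \<longrightarrow> lt (u + w) (v + w))"

definition fiber :: "nat \<Rightarrow> vec set \<Rightarrow> vec \<Rightarrow> vec set" where
  "fiber c L u = {v \<in> ZI_nonneg c. u - v \<in> L}"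

definition is_generating_set :: "nat \<Rightarrow> vec set \<Rightarrow> vec set \<Rightarrow> bool" where
  "is_generating_set c L B \<longleftrightarrow> B \<subseteq> L \<and> gen_subgroup B = L"

definition is_markov_basis :: "nat \<Rightarrow> vec set \<Rightarrow> vec set \<Rightarrow> bool" where
  "is_markov_basis c L B \<longleftrightarrow> B \<subseteq> L \<and>
     (\<forall>u\<in>ZI_nonneg c. \<forall>v\<in>fiber c L u. \<forall>w\<in>fiber c L u.
        (v, w) \<in> {(x, y). x \<in> fiber c L u \<and> y \<in> fiber c L u \<and> (x - y \<in> B \<or> y - x \<in> B)}\<^sup>*)"

definition is_groebner_basis :: "nat \<Rightarrow> (vec \<Rightarrow> vec \<Rightarrow> bool) \<Rightarrow> vec set \<Rightarrow> vec set \<Rightarrow> bool" where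
  "is_groebner_basis c lt L B \<longleftrightarrow> B \<subseteq> L \<and>
     (\<forall>u\<in>ZI_nonneg c. \<forall>m\<in>fiber c L u. (\<forall>v\<in>fiber c L u. v \<noteq> m \<longrightarrow> lt m v) \<longrightarrow>
        (u, m) \<in> {(x, y). x \<in> fiber c L u \<and> y \<in> fiber c L u \<and> (x - y \<in> B \<or> y - x \<in> B) \<and> lt y x}\<^sup>*)"

definition is_universal_groebner_basis :: "nat \<Rightarrow> vec set \<Rightarrow> vec set \<Rightarrow> bool" where
  "is_universal_groebner_basis c L B \<longleftrightarrow>
     (\<forall>lt. term_order c lt \<longrightarrow> is_groebner_basis c lt L B)"

end

theory Submission
  imports Defs "HOL-Library.Ramsey"
begin


definition afull :: "('a \<Rightarrow> 'a \<Rightarrow> bool) \<Rightarrow> 'a set \<Rightarrow> bool" where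
  "afull P A \<longleftrightarrow> (\<forall>f::nat \<Rightarrow> 'a. (\<forall>i. f i \<in> A) \<longrightarrow> (\<exists>i j. i < j \<and> P (f i) (f j)))"

lemma afullD:
  fixes g :: "nat \<Rightarrow> 'a"
  assumes "afull P A" "\<And>i. g i \<in> A"
  shows "\<exists>i j. i < j \<and> P (g i) (g j)"
  using assms unfolding afull_def by blast

lemma af_subseq:
  fixes f :: "nat \<Rightarrow> 'a"
  assumes "afull P A" "\<And>i. f i \<in> A"
  shows "\<exists>\<phi>::nat\<Rightarrow>nat. strict_mono \<phi> \<and> (\<forall>i j. i < j \<longrightarrow> P (f (\<phi> i)) (f (\<phi> j)))"
proof -
  define col where "col = (\<lambda>X::nat set. if P (f (Min X)) (f (Max X)) then 0 else (1::nat))"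
  have c2: "\<forall>x\<in>(UNIV::nat set). \<forall>y\<in>UNIV. x \<noteq> y \<longrightarrow> col {x, y} < 2"
    by (simp add: col_def)
  have "\<exists>Y t. Y \<subseteq> (UNIV::nat set) \<and> infinite Y \<and> t < 2 \<and> (\<forall>x\<in>Y. \<forall>y\<in>Y. x\<noteq>y \<longrightarrow> col {x, y} = t)"
    by (rule Ramsey2[OF infinite_UNIV_nat c2])
  then obtain Y t where Y: "infinite Y" "t < 2" "\<forall>x\<in>Y. \<forall>y\<in>Y. x\<noteq>y \<longrightarrow> col {x, y} = t" by blast
  define \<phi> where "\<phi> = enumerate Y"
  have sm: "strict_mono \<phi>" using Y by (simp add: \<phi>_def strict_mono_enumerate)
  have inY: "\<phi> i \<in> Y" for i using Y by (simp add: \<phi>_def enumerate_in_set)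
  have colij: "col {\<phi> i, \<phi> j} = (if P (f (\<phi> i)) (f (\<phi> j)) then 0 else 1)" if "i < j" for i j
  proof -
    have "\<phi> i < \<phi> j" using sm that by (simp add: strict_mono_less)
    then have "Min {\<phi> i, \<phi> j} = \<phi> i" "Max {\<phi> i, \<phi> j} = \<phi> j" by (simp_all add: min_def max_def)
    then show ?thesis by (simp add: col_def)
  qed
  have ne: "\<phi> i \<noteq> \<phi> j" if "i < j" for i j using strict_monoD[OF sm that] by simp
  have colt: "col {\<phi> i, \<phi> j} = t" if ij: "i < j" for i j
    by (rule Y(3)[rule_format, OF inY inY ne[OF ij]])
  show ?thesis
  proof (cases "t = 0")
    case True
    have "\<forall>i j. i < j \<longrightarrow> P (f (\<phi> i)) (f (\<phi> j))"
    proof (intro allI impI)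
      fix i j :: nat assume ij: "i < j"
      have "(if P (f (\<phi> i)) (f (\<phi> j)) then 0 else 1) = (0::nat)"
        using colij[OF ij] colt[OF ij] True by simp
      then show "P (f (\<phi> i)) (f (\<phi> j))" by (simp split: if_splits)
    qed
    then show ?thesis using sm by (intro exI[of _ \<phi>] conjI)
  next
    case False
    then have t1: "t = 1" using Y(2) by linarith
    have fa: "\<And>i. f (\<phi> i) \<in> A" using assms(2) by simp
    obtain i j where ij: "i < j" and p: "P (f (\<phi> i)) (f (\<phi> j))"
      using afullD[OF assms(1) fa] by blast
    have "(if P (f (\<phi> i)) (f (\<phi> j)) then 0 else 1) = (1::nat)"
      using colij[OF ij] colt[OF ij] t1 by simp
    then have False using p by simp
    then show ?thesis by simp
  qed
qed

lemma af_inter: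
  assumes "afull P A" "afull Q A"
  shows "afull (\<lambda>x y. P x y \<and> Q x y) A"
  unfolding afull_def
proof (intro allI impI)
  fix f :: "nat \<Rightarrow> _" assume f: "\<forall>i. f i \<in> A"
  obtain \<phi> :: "nat \<Rightarrow> nat" where sm: "strict_mono \<phi>" and P: "\<forall>i j. i < j \<longrightarrow> P (f (\<phi> i)) (f (\<phi> j))"
    using af_subseq[OF assms(1)] f by blast
  obtain i j where "i < j" "Q (f (\<phi> i)) (f (\<phi> j))"
    using afullD[OF assms(2), of "\<lambda>i. f (\<phi> i)"] f by blast
  then show "\<exists>i j. i < j \<and> P (f i) (f j) \<and> Q (f i) (f j)"
    using P sm by (metis strict_mono_less)
qed

lemma af_map:
  assumes "afull P A" "\<And>x. x \<in> C \<Longrightarrow> g x \<in> A"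
    "\<And>x y. x \<in> C \<Longrightarrow> y \<in> C \<Longrightarrow> P (g x) (g y) \<Longrightarrow> Q x y"
  shows "afull Q C"
  unfolding afull_def
proof (intro allI impI)
  fix f :: "nat \<Rightarrow> _" assume f: "\<forall>i. f i \<in> C"
  then obtain i j where "i < j" "P (g (f i)) (g (f j))"
    using afullD[OF assms(1), of "\<lambda>i. g (f i)"] assms(2) by blast
  then show "\<exists>i j. i < j \<and> Q (f i) (f j)" using assms(3) f by blast
qed

lemma af_union:
  assumes "afull P A" "afull P B"
  shows "afull P (A \<union> B)"
  unfolding afull_def
proof (intro allI impI)
  fix f :: "nat \<Rightarrow> _" assume f: "\<forall>i. f i \<in> A \<union> B"
  have "infinite {i. f i \<in> A} \<or> infinite {i. f i \<in> B}"
  proof (rule ccontr)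
    assume "\<not> ?thesis"
    then have "finite ({i. f i \<in> A} \<union> {i. f i \<in> B})" by auto
    moreover have "{i. f i \<in> A} \<union> {i. f i \<in> B} = UNIV" using f by auto
    ultimately show False by simp
  qed
  moreover have "\<exists>i j. i < j \<and> P (f i) (f j)" if inf: "infinite S" and S: "\<forall>i\<in>S. f i \<in> D" and D: "afull P D" for S D
  proof -
    have "\<forall>i. f (enumerate S i) \<in> D" using S inf by (simp add: enumerate_in_set)
    then obtain i j where "i < j" "P (f (enumerate S i)) (f (enumerate S j))"
      using afullD[OF D, of "\<lambda>i. f (enumerate S i)"] by blast
    then show ?thesis using inf by (metis enumerate_mono)
  qed
  ultimately show "\<exists>i j. i < j \<and> P (f i) (f j)" using assms by blast
qed

lemma af_nat: "afull ((\<le>)::nat \<Rightarrow> nat \<Rightarrow> bool) UNIV"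
  unfolding afull_def
proof (intro allI impI)
  fix f :: "nat \<Rightarrow> nat"
  define m where "m = (LEAST v. v \<in> range f)"
  have "m \<in> range f" unfolding m_def by (rule LeastI_ex) blast
  then obtain i where i: "f i = m" by blast
  have "m \<le> f (Suc i)" unfolding m_def by (rule Least_le) blast
  then show "\<exists>i j. i < j \<and> f i \<le> f j" using i by (intro exI[of _ i] exI[of _ "Suc i"]) auto
qed

definition conf :: "int \<Rightarrow> int \<Rightarrow> bool" where
  "conf a b \<longleftrightarrow> (0 \<le> a \<and> a \<le> b) \<or> (b \<le> a \<and> a \<le> 0)"

lemma af_conf: "afull conf UNIV"
proof -
  have 1: "afull conf {a. 0 \<le> a}"
    by (rule af_map[OF af_nat, of _ nat]) (auto simp: conf_def)
  have 2: "afull conf {a. a \<le> 0}"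
    by (rule af_map[OF af_nat, of _ "\<lambda>a. nat (- a)"]) (auto simp: conf_def)
  have "UNIV = {a::int. 0 \<le> a} \<union> {a. a \<le> 0}" by auto
  then show ?thesis using af_union[OF 1 2] by simp
qed

lemma af_cols: "afull (\<lambda>a b. \<forall>j\<in>{1..(n::nat)}. conf (a j) (b j)) UNIV"
proof (induction n)
  case 0
  show ?case unfolding afull_def by (intro allI impI exI[of _ 0] exI[of _ 1]) auto
next
  case (Suc n)
  have "afull (\<lambda>a b. conf (a (Suc n)) (b (Suc n))) UNIV"
    by (rule af_map[OF af_conf, of _ "\<lambda>a. a (Suc n)"]) auto
  from af_inter[OF Suc this] show ?case
    by (rule af_map[of _ _ _ id]) (auto simp: le_Suc_eq)
qed



inductive lemb :: "('a \<Rightarrow> 'a \<Rightarrow> bool) \<Rightarrow> 'a list \<Rightarrow> 'a list \<Rightarrow> bool" for P where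
  lemb_Nil: "lemb P [] ys"
| lemb_skip: "lemb P xs ys \<Longrightarrow> lemb P xs (y # ys)"
| lemb_cons: "P x y \<Longrightarrow> lemb P xs ys \<Longrightarrow> lemb P (x # xs) (y # ys)"

primrec pre :: "('a list \<Rightarrow> 'a) \<Rightarrow> nat \<Rightarrow> 'a list" where
  "pre F 0 = []"
| "pre F (Suc n) = pre F n @ [F (pre F n)]"

lemma pre_eq: "pre F n = map (\<lambda>k. F (pre F k)) [0..<n]"
  by (induction n) auto

lemma seq_exists: "\<exists>s::nat \<Rightarrow> 'a. \<forall>n. s n = F (map s [0..<n])"
  by (rule exI[of _ "\<lambda>k. F (pre F k)"]) (metis pre_eq)

definition bad :: "('a \<Rightarrow> 'a \<Rightarrow> bool) \<Rightarrow> (nat \<Rightarrow> 'a) \<Rightarrow> bool" where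
  "bad P f \<longleftrightarrow> \<not> (\<exists>i j. i < j \<and> P (f i) (f j))"

lemma afull_UNIV_iff: "afull P UNIV \<longleftrightarrow> (\<forall>f. \<not> bad P f)"
  unfolding afull_def bad_def by auto

lemma higman:
  assumes Q: "afull Q UNIV"
  shows "afull (lemb Q) UNIV"
proof (rule ccontr)
  assume "\<not> afull (lemb Q) UNIV"
  then obtain f0 where f0: "bad (lemb Q) f0" unfolding afull_UNIV_iff by blast
  define C where "C = (\<lambda>xs ys. \<exists>g. bad (lemb Q) g \<and> (\<forall>i<length xs. g i = xs ! i) \<and> g (length xs) = ys)"
  define F where "F = (\<lambda>xs. arg_min length (C xs))"
  obtain m where m: "\<And>n. m n = F (map m [0..<n])" using seq_exists[of F] by blast
  have inv: "\<exists>g. bad (lemb Q) g \<and> (\<forall>i<n. g i = m i)" for n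
  proof (induction n)
    case 0 then show ?case using f0 by blast
  next
    case (Suc n)
    then obtain g where g: "bad (lemb Q) g" "\<forall>i<n. g i = m i" by blast
    have "C (map m [0..<n]) (g n)" unfolding C_def using g by (intro exI[of _ g]) auto
    then have "C (map m [0..<n]) (F (map m [0..<n]))" unfolding F_def by (rule arg_min_natI)
    then have "C (map m [0..<n]) (m n)" using m by simp
    then obtain g' where "bad (lemb Q) g'" "\<forall>i<n. g' i = m i" "g' n = m n" unfolding C_def by auto
    then show ?case by (intro exI[of _ g']) (auto simp: less_Suc_eq)
  qed
  have minimal: "length (m n) \<le> length (g n)" if "bad (lemb Q) g" "\<forall>i<n. g i = m i" for g n
  proof -
    have "C (map m [0..<n]) (g n)" unfolding C_def using that by (intro exI[of _ g]) auto
    then have "length (F (map m [0..<n])) \<le> length (g n)" unfolding F_def by (rule arg_min_nat_le)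
    then show ?thesis using m by simp
  qed
  have mbad: "bad (lemb Q) m"
    unfolding bad_def
  proof
    assume "\<exists>i j. i < j \<and> lemb Q (m i) (m j)"
    then obtain i j where ij: "i < j" "lemb Q (m i) (m j)" by blast
    obtain g where g: "bad (lemb Q) g" "\<forall>k<Suc j. g k = m k" using inv by blast
    have "g i = m i" "g j = m j" using g(2) ij(1) by auto
    then show False using ij g(1) unfolding bad_def by metis
  qed
  have ne: "m n \<noteq> []" for n
  proof
    assume "m n = []"
    then have "lemb Q (m n) (m (Suc n))" by (simp add: lemb_Nil)
    then show False using mbad unfolding bad_def by blast
  qed
  obtain \<phi> :: "nat \<Rightarrow> nat" where sm: "strict_mono \<phi>"
    and hq: "\<forall>i j. i < j \<longrightarrow> Q (hd (m (\<phi> i))) (hd (m (\<phi> j)))"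
    using af_subseq[OF Q, of "\<lambda>n. hd (m n)"] by blast
  define g where "g = (\<lambda>k. if k < \<phi> 0 then m k else tl (m (\<phi> (k - \<phi> 0))))"
  have tl_emb: "lemb Q xs (tl ys) \<Longrightarrow> ys \<noteq> [] \<Longrightarrow> lemb Q xs ys" for xs ys
    by (cases ys) (auto intro: lemb_skip)
  have phimono: "\<phi> 0 \<le> \<phi> k" for k using sm by (simp add: strict_mono_less_eq)
  have gbad: "bad (lemb Q) g"
    unfolding bad_def
  proof
    assume "\<exists>i j. i < j \<and> lemb Q (g i) (g j)"
    then obtain i j where ij: "i < j" and e: "lemb Q (g i) (g j)" by blast
    show False
    proof (cases "j < \<phi> 0")
      case True
      then show False using ij e mbad unfolding g_def bad_def by auto
    next
      case jge: False
      show False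
      proof (cases "i < \<phi> 0")
        case True
        then have "lemb Q (m i) (tl (m (\<phi> (j - \<phi> 0))))" using e jge unfolding g_def by auto
        then have "lemb Q (m i) (m (\<phi> (j - \<phi> 0)))" using ne tl_emb by blast
        moreover have "i < \<phi> (j - \<phi> 0)" using True phimono[of "j - \<phi> 0"] by linarith
        ultimately show False using mbad unfolding bad_def by blast
      next
        case False
        define a where "a = i - \<phi> 0"
        define b where "b = j - \<phi> 0"
        have ab: "a < b" using False ij unfolding a_def b_def by linarith
        have "lemb Q (tl (m (\<phi> a))) (tl (m (\<phi> b)))" using e False jge unfolding g_def a_def b_def by auto
        then have "lemb Q (hd (m (\<phi> a)) # tl (m (\<phi> a))) (hd (m (\<phi> b)) # tl (m (\<phi> b)))"
          using hq ab by (intro lemb_cons) auto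
        then have "lemb Q (m (\<phi> a)) (m (\<phi> b))" using ne by simp
        moreover have "\<phi> a < \<phi> b" using sm ab by (simp add: strict_mono_less)
        ultimately show False using mbad unfolding bad_def by blast
      qed
    qed
  qed
  have "length (m (\<phi> 0)) \<le> length (g (\<phi> 0))"
    by (rule minimal[OF gbad]) (simp add: g_def)
  moreover have "length (g (\<phi> 0)) < length (m (\<phi> 0))" using ne[of "\<phi> 0"] by (simp add: g_def)
  ultimately show False by simp
qed



definition cleq :: "vec \<Rightarrow> vec \<Rightarrow> bool" where
  "cleq u v \<longleftrightarrow> (\<forall>x. conf (u x) (v x))"

definition csupp :: "vec \<Rightarrow> nat set" where
  "csupp u = fst ` {x. u x \<noteq> 0}"

definition lst :: "vec \<Rightarrow> (nat \<times> (nat \<Rightarrow> int)) list" where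
  "lst u = map (\<lambda>i. (i, \<lambda>j. u (i, j))) (sorted_list_of_set (csupp u))"

definition Qc :: "nat \<Rightarrow> nat \<times> (nat \<Rightarrow> int) \<Rightarrow> nat \<times> (nat \<Rightarrow> int) \<Rightarrow> bool" where
  "Qc c p q \<longleftrightarrow> (\<forall>j\<in>{1..c}. conf (snd p j) (snd q j))"

lemma conf_0 [simp]: "conf 0 b"
  by (auto simp: conf_def)

lemma lemb_inj:
  assumes "lemb P xs ys" "distinct xs" "distinct ys"
  shows "\<exists>h. inj_on h (set xs) \<and> (\<forall>x\<in>set xs. h x \<in> set ys \<and> P x (h x))"
  using assms
proof (induction rule: lemb.induct)
  case (lemb_Nil ys)
  then show ?case by auto
next
  case (lemb_skip xs ys y)
  then obtain h where "inj_on h (set xs)" "\<forall>x\<in>set xs. h x \<in> set ys \<and> P x (h x)" by auto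
  then show ?case by (intro exI[of _ h]) auto
next
  case (lemb_cons x y xs ys)
  then obtain h where h: "inj_on h (set xs)" "\<forall>x\<in>set xs. h x \<in> set ys \<and> P x (h x)" by auto
  have xn: "x \<notin> set xs" and yn: "y \<notin> set ys" using lemb_cons.prems by auto
  define h' where "h' = h(x := y)"
  have 1: "\<forall>z\<in>set xs. h' z = h z" using xn unfolding h'_def by auto
  have "inj_on h' (set (x # xs))"
  proof -
    have "inj_on h' (set xs)" using h(1) 1 inj_on_cong by metis
    moreover have "h' x \<notin> h' ` (set xs - {x})" using 1 h(2) yn unfolding h'_def by auto
    ultimately show ?thesis by simp
  qed
  moreover have "\<forall>z\<in>set (x # xs). h' z \<in> set (y # ys) \<and> P z (h' z)"
    using 1 h(2) lemb_cons.hyps(1) unfolding h'_def by auto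
  ultimately show ?case by blast
qed

lemma sym_extend:
  assumes fin: "finite S" and S1: "S \<subseteq> {1..}" and inj: "inj_on h S" and h1: "h ` S \<subseteq> {1..}"
  shows "\<exists>\<sigma>\<in>Sym. \<forall>i\<in>S. \<sigma> i = h i"
proof -
  define D where "D = S \<union> h ` S"
  have finD: "finite D" using fin unfolding D_def by auto
  have "card (D - S) = card D - card S" using fin finD by (simp add: D_def card_Diff_subset)
  moreover have "card (D - h ` S) = card D - card (h ` S)" using fin finD by (simp add: D_def card_Diff_subset)
  moreover have "card (h ` S) = card S" using inj by (simp add: card_image)
  ultimately have "card (D - S) = card (D - h ` S)" by simp
  then obtain g where g: "bij_betw g (D - S) (D - h ` S)"
    using finite_same_card_bij finD by (metis finite_Diff)
  define \<sigma> where "\<sigma> = (\<lambda>x. if x \<in> S then h x else if x \<in> D then g x else x)"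
  have img: "\<sigma> ` D \<subseteq> D"
    using g unfolding \<sigma>_def D_def bij_betw_def by auto
  have injs: "inj_on \<sigma> D"
  proof (rule inj_onI)
    fix x y assume xy: "x \<in> D" "y \<in> D" "\<sigma> x = \<sigma> y"
    show "x = y"
    proof (cases "x \<in> S"; cases "y \<in> S")
      assume "x \<in> S" "y \<in> S" then show ?thesis using xy inj unfolding \<sigma>_def by (auto dest: inj_onD)
    next
      assume "x \<in> S" "y \<notin> S"
      then have "\<sigma> y \<in> D - h ` S" "\<sigma> x \<in> h ` S" using g xy unfolding \<sigma>_def bij_betw_def by auto
      then show ?thesis using xy by auto
    next
      assume "x \<notin> S" "y \<in> S"
      then have "\<sigma> x \<in> D - h ` S" "\<sigma> y \<in> h ` S" using g xy unfolding \<sigma>_def bij_betw_def by auto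
      then show ?thesis using xy by auto
    next
      assume "x \<notin> S" "y \<notin> S"
      then show ?thesis using xy g unfolding \<sigma>_def bij_betw_def by (auto dest: inj_onD)
    qed
  qed
  have "\<sigma> ` D = D" using endo_inj_surj[OF finD img injs] .
  then have "bij_betw \<sigma> D D" using injs by (simp add: bij_betw_def)
  then have "\<sigma> permutes D" by (rule bij_imp_permutes) (auto simp: \<sigma>_def D_def)
  moreover have "D \<subseteq> {1..}" using S1 h1 unfolding D_def by auto
  ultimately have "\<sigma> permutes {1..}" by (rule permutes_subset)
  moreover have "finite {i. \<sigma> i \<noteq> i}"
    by (rule finite_subset[OF _ finD]) (auto simp: \<sigma>_def D_def split: if_splits)
  ultimately have "\<sigma> \<in> Sym" by (simp add: Sym_def)
  then show ?thesis by (intro bexI[of _ \<sigma>]) (auto simp: \<sigma>_def)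
qed

lemma csupp_finite: "u \<in> ZI c \<Longrightarrow> finite (csupp u)"
  unfolding ZI_def csupp_def by auto

lemma csupp_sub: "u \<in> ZI c \<Longrightarrow> csupp u \<subseteq> {1..}"
  unfolding ZI_def csupp_def index_set_def by force

lemma set_lst: "u \<in> ZI c \<Longrightarrow> set (lst u) = (\<lambda>i. (i, \<lambda>j. u (i, j))) ` csupp u"
  unfolding lst_def using csupp_finite by simp

lemma distinct_lst: "u \<in> ZI c \<Longrightarrow> distinct (lst u)"
  unfolding lst_def using csupp_finite
  by (auto simp: distinct_map inj_on_def)

lemma wqo_ZI: "afull (\<lambda>u v. \<exists>\<sigma>\<in>Sym. cleq (act \<sigma> u) v) (ZI c)"
proof -
  have aq: "afull (Qc c) UNIV"
    by (rule af_map[OF af_cols[of c], of _ snd]) (auto simp: Qc_def)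
  show ?thesis
  proof (rule af_map[OF higman[OF aq], of _ lst])
    fix u v assume u: "u \<in> ZI c" and v: "v \<in> ZI c" and e: "lemb (Qc c) (lst u) (lst v)"
    obtain h where h: "inj_on h (set (lst u))" "\<forall>x\<in>set (lst u). h x \<in> set (lst v) \<and> Qc c x (h x)"
      using lemb_inj[OF e distinct_lst[OF u] distinct_lst[OF v]] by blast
    define hi where "hi = (\<lambda>i. fst (h (i, \<lambda>j. u (i, j))))"
    have hi: "hi i \<in> csupp v \<and> h (i, \<lambda>j. u (i, j)) = (hi i, \<lambda>j. v (hi i, j))
         \<and> (\<forall>j\<in>{1..c}. conf (u (i, j)) (v (hi i, j)))" if "i \<in> csupp u" for i
    proof -
      have "(i, \<lambda>j. u (i, j)) \<in> set (lst u)" using set_lst[OF u] that by auto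
      then have "h (i, \<lambda>j. u (i, j)) \<in> set (lst v)" "Qc c (i, \<lambda>j. u (i, j)) (h (i, \<lambda>j. u (i, j)))"
        using h(2) by auto
      then show ?thesis using set_lst[OF v] unfolding hi_def Qc_def by auto
    qed
    have "inj_on hi (csupp u)"
    proof (rule inj_onI)
      fix i i' assume ii: "i \<in> csupp u" "i' \<in> csupp u" "hi i = hi i'"
      then have "h (i, \<lambda>j. u (i, j)) = h (i', \<lambda>j. u (i', j))" using hi by metis
      moreover have "(i, \<lambda>j. u (i, j)) \<in> set (lst u)" "(i', \<lambda>j. u (i', j)) \<in> set (lst u)"
        using set_lst[OF u] ii by auto
      ultimately show "i = i'" using h(1) by (auto dest: inj_onD)
    qed
    moreover have "hi ` csupp u \<subseteq> {1..}" using hi csupp_sub[OF v] by blast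
    ultimately obtain \<sigma> where \<sigma>: "\<sigma> \<in> Sym" "\<forall>i\<in>csupp u. \<sigma> i = hi i"
      using sym_extend[OF csupp_finite[OF u] csupp_sub[OF u]] by blast
    have perm: "\<sigma> permutes {1..}" using \<sigma>(1) by (simp add: Sym_def)
    have "cleq (act \<sigma> u) v"
      unfolding cleq_def
    proof
      fix x :: "nat \<times> nat"
      obtain k j where x: "x = (k, j)" by (cases x)
      define i where "i = inv \<sigma> k"
      have ki: "\<sigma> i = k" unfolding i_def using permutes_inverses[OF perm] by simp
      have "conf (u (i, j)) (v (k, j))"
      proof (cases "u (i, j) = 0")
        case False
        then have "i \<in> csupp u" unfolding csupp_def by force
        moreover have "j \<in> {1..c}" using False u unfolding ZI_def index_set_def by auto
        ultimately show ?thesis using hi \<sigma>(2) ki by metis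
      qed simp
      then show "conf (act \<sigma> u x) (v x)" unfolding act_def x i_def by simp
    qed
    then show "\<exists>\<sigma>\<in>Sym. cleq (act \<sigma> u) v" using \<sigma>(1) by blast
  qed simp
qed



lemma finite_basis:
  assumes "afull R S"
  shows "\<exists>B. finite B \<and> B \<subseteq> S \<and> (\<forall>s\<in>S. \<exists>b\<in>B. R b s)"
proof (rule ccontr)
  assume na: "\<not> ?thesis"
  have ex: "\<exists>s\<in>S. \<forall>b\<in>B. \<not> R b s" if fB: "finite B" and BS: "B \<subseteq> S" for B
  proof -
    have "\<not> (\<forall>s\<in>S. \<exists>b\<in>B. R b s)"
    proof
      assume "\<forall>s\<in>S. \<exists>b\<in>B. R b s"
      then have "finite B \<and> B \<subseteq> S \<and> (\<forall>s\<in>S. \<exists>b\<in>B. R b s)" using fB BS by simp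
      then have "\<exists>B. finite B \<and> B \<subseteq> S \<and> (\<forall>s\<in>S. \<exists>b\<in>B. R b s)" by (rule exI)
      with na show False by (rule notE)
    qed
    then show ?thesis by simp
  qed
  define F where "F = (\<lambda>xs. SOME s. s \<in> S \<and> (\<forall>b\<in>set xs. \<not> R b s))"
  obtain s where s: "\<And>n. s n = F (map s [0..<n])" using seq_exists[of F] by blast
  have P: "s n \<in> S \<and> (\<forall>b\<in>set (map s [0..<n]). \<not> R b (s n))" for n
  proof (induction n rule: less_induct)
    case (less n)
    have sub: "set (map s [0..<n]) \<subseteq> S" using less by auto
    obtain x where "x \<in> S" "\<forall>b\<in>set (map s [0..<n]). \<not> R b x" using ex[OF finite_set sub] by (elim bexE)
    then have "\<exists>x. x \<in> S \<and> (\<forall>b\<in>set (map s [0..<n]). \<not> R b x)" by (intro exI[of _ x] conjI)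
    then have "F (map s [0..<n]) \<in> S \<and> (\<forall>b\<in>set (map s [0..<n]). \<not> R b (F (map s [0..<n])))"
      unfolding F_def by (rule someI_ex)
    then show ?case using s[of n] by simp
  qed
  have sS: "s i \<in> S" for i using P by simp
  have "\<exists>i j. i < j \<and> R (s i) (s j)" by (rule afullD[OF assms sS])
  then obtain i j where ij: "i < j" and r: "R (s i) (s j)" by blast
  have "s i \<in> set (map s [0..<j])" using ij by simp
  moreover have "\<forall>b\<in>set (map s [0..<j]). \<not> R b (s j)" using P[of j] by blast
  ultimately have "\<not> R (s i) (s j)" by blast
  then show False using r by simp
qed

definition pos :: "vec \<Rightarrow> vec" where "pos v = (\<lambda>x. max (v x) 0)"
definition neg :: "vec \<Rightarrow> vec" where "neg v = (\<lambda>x. max (- v x) 0)"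
definition nrm :: "vec \<Rightarrow> nat" where "nrm v = (\<Sum>x\<in>{x. v x \<noteq> 0}. nat \<bar>v x\<bar>)"

lemma pos_neg: "pos v - neg v = v"
  by (auto simp: pos_def neg_def fun_eq_iff)

lemma ZI_I: "finite {x. v x \<noteq> 0} \<Longrightarrow> (\<And>x. v x \<noteq> 0 \<Longrightarrow> x \<in> index_set c) \<Longrightarrow> v \<in> ZI c"
  by (simp add: ZI_def)
lemma ZI_fin: "u \<in> ZI c \<Longrightarrow> finite {x. u x \<noteq> 0}"
  by (simp add: ZI_def)
lemma ZI_idx: "u \<in> ZI c \<Longrightarrow> u x \<noteq> 0 \<Longrightarrow> x \<in> index_set c"
  unfolding ZI_def by (cases x) auto

lemma ZI_diff: "u \<in> ZI c \<Longrightarrow> v \<in> ZI c \<Longrightarrow> u - v \<in> ZI c"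
proof -
  assume u: "u \<in> ZI c" and v: "v \<in> ZI c"
  have sub: "{x. (u - v) x \<noteq> 0} \<subseteq> {x. u x \<noteq> 0} \<union> {x. v x \<noteq> 0}" by auto
  show ?thesis
  proof (rule ZI_I)
    show "finite {x. (u - v) x \<noteq> 0}" by (rule finite_subset[OF sub finite_UnI[OF ZI_fin[OF u] ZI_fin[OF v]]])
    fix x assume "(u - v) x \<noteq> 0"
    then have "u x \<noteq> 0 \<or> v x \<noteq> 0" by auto
    then show "x \<in> index_set c" using ZI_idx[OF u] ZI_idx[OF v] by blast
  qed
qed

lemma ZI_sub_supp: "u \<in> ZI c \<Longrightarrow> (\<And>x. v x \<noteq> 0 \<Longrightarrow> u x \<noteq> 0) \<Longrightarrow> v \<in> ZI c"
proof -
  assume u: "u \<in> ZI c" and h: "\<And>x. v x \<noteq> 0 \<Longrightarrow> u x \<noteq> 0"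
  have sub: "{x. v x \<noteq> 0} \<subseteq> {x. u x \<noteq> 0}" using h by auto
  show ?thesis
  proof (rule ZI_I)
    show "finite {x. v x \<noteq> 0}" by (rule finite_subset[OF sub ZI_fin[OF u]])
    fix x assume "v x \<noteq> 0"
    then show "x \<in> index_set c" using ZI_idx[OF u h] by blast
  qed
qed

lemma pos_ZI: assumes "v \<in> ZI c" shows "pos v \<in> ZI_nonneg c"
proof -
  have "pos v \<in> ZI c"
  proof (rule ZI_sub_supp[OF assms])
    fix x assume "pos v x \<noteq> 0" then show "v x \<noteq> 0" by (simp add: pos_def)
  qed
  moreover have "\<forall>x. 0 \<le> pos v x" by (simp add: pos_def)
  ultimately show ?thesis unfolding ZI_nonneg_def by blast
qed

lemma neg_ZI: assumes "v \<in> ZI c" shows "neg v \<in> ZI_nonneg c"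
proof -
  have "neg v \<in> ZI c"
  proof (rule ZI_sub_supp[OF assms])
    fix x assume "neg v x \<noteq> 0" then show "v x \<noteq> 0" by (auto simp: neg_def)
  qed
  moreover have "\<forall>x. 0 \<le> neg v x" by (simp add: neg_def)
  ultimately show ?thesis unfolding ZI_nonneg_def by blast
qed

lemma cleq_diff: "cleq g l \<Longrightarrow> cleq (l - g) l"
  unfolding cleq_def conf_def by auto

lemma cleq_trans: assumes "cleq a b" "cleq b d" shows "cleq a d"
  unfolding cleq_def
proof
  fix x
  have "conf (a x) (b x)" "conf (b x) (d x)" using assms unfolding cleq_def by blast+
  then show "conf (a x) (d x)" unfolding conf_def by auto
qed

lemma cleq_pos: assumes "cleq g l" shows "pos (l - g) = pos l - pos g"
proof (rule ext)
  fix x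
  have "conf (g x) (l x)" using assms unfolding cleq_def by blast
  then show "pos (l - g) x = (pos l - pos g) x" unfolding conf_def pos_def by auto
qed

lemma cleq_neg: assumes "cleq g l" shows "neg (l - g) = neg l - neg g"
proof (rule ext)
  fix x
  have "conf (g x) (l x)" using assms unfolding cleq_def by blast
  then show "neg (l - g) x = (neg l - neg g) x" unfolding conf_def neg_def by auto
qed

lemma subgroup_uminus: assumes "is_subgroup H" "a \<in> H" shows "- a \<in> H"
proof -
  have "0 \<in> H" "\<forall>a\<in>H. \<forall>b\<in>H. a - b \<in> H" using assms(1) unfolding is_subgroup_def by auto
  then have "0 - a \<in> H" using assms(2) by blast
  then show ?thesis by simp
qed

lemma subgroup_add: assumes "is_subgroup H" "a \<in> H" "b \<in> H" shows "a + b \<in> H"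
proof -
  have h: "\<forall>a\<in>H. \<forall>b\<in>H. a - b \<in> H" using assms(1) unfolding is_subgroup_def by auto
  have "- b \<in> H" using subgroup_uminus assms by blast
  then have "a - (- b) \<in> H" using h assms(2) by blast
  then show ?thesis by simp
qed

lemma nrm_less:
  assumes l: "l \<in> ZI c" and g: "cleq g l" "g \<noteq> 0"
  shows "nrm (l - g) < nrm l"
proof -
  define S where "S = {x. l x \<noteq> 0}"
  have fin: "finite S" using l unfolding S_def ZI_def by auto
  have sub: "{x. (l - g) x \<noteq> 0} \<subseteq> S"
  proof
    fix x assume x: "x \<in> {x. (l - g) x \<noteq> 0}"
    have "conf (g x) (l x)" using g(1) unfolding cleq_def by blast
    then show "x \<in> S" using x unfolding S_def conf_def by auto
  qed
  have "nrm (l - g) = (\<Sum>x\<in>S. nat \<bar>(l - g) x\<bar>)"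
    unfolding nrm_def by (rule sum.mono_neutral_left[OF fin sub]) auto
  moreover have "(\<Sum>x\<in>S. nat \<bar>(l - g) x\<bar>) < (\<Sum>x\<in>S. nat \<bar>l x\<bar>)"
  proof (rule sum_strict_mono_ex1[OF fin])
    show "\<forall>x\<in>S. nat \<bar>(l - g) x\<bar> \<le> nat \<bar>l x\<bar>"
    proof
      fix x
      have "conf (g x) (l x)" using g(1) unfolding cleq_def by blast
      then have "\<bar>l x - g x\<bar> \<le> \<bar>l x\<bar>" unfolding conf_def by auto
      then show "nat \<bar>(l - g) x\<bar> \<le> nat \<bar>l x\<bar>" by simp
    qed
    obtain x0 where "g x0 \<noteq> 0" using g(2) by (auto simp: fun_eq_iff)
    moreover have "conf (g x0) (l x0)" using g(1) unfolding cleq_def by blast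
    ultimately have "x0 \<in> S" "nat \<bar>(l - g) x0\<bar> < nat \<bar>l x0\<bar>" unfolding S_def conf_def
      by auto
    then show "\<exists>x\<in>S. nat \<bar>(l - g) x\<bar> < nat \<bar>l x\<bar>" by blast
  qed
  ultimately show ?thesis unfolding nrm_def S_def by simp
qed



locale setting =
  fixes c :: nat and L :: "vec set" and G :: "vec set"
  assumes Lsub: "L \<subseteq> ZI c" and Lgrp: "is_subgroup L"
    and GL: "G \<subseteq> L" and G0: "0 \<notin> G"
    and cover: "\<And>l. l \<in> L \<Longrightarrow> l \<noteq> 0 \<Longrightarrow> \<exists>g\<in>G. cleq g l"
begin

lemma L_diff: "a \<in> L \<Longrightarrow> b \<in> L \<Longrightarrow> a - b \<in> L"
  using Lgrp unfolding is_subgroup_def by blast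

lemma L_add: "a \<in> L \<Longrightarrow> b \<in> L \<Longrightarrow> a + b \<in> L"
  using Lgrp subgroup_add by blast

lemma step_vec:
  assumes v: "v \<in> ZI_nonneg c" and w: "w \<in> ZI_nonneg c" and g: "cleq g (v - w)" and gG: "g \<in> G"
  shows "v - g \<in> ZI_nonneg c" and "v - pos g \<in> ZI_nonneg c"
proof -
  have gZ: "g \<in> ZI c" using gG GL Lsub by blast
  have vZ: "v \<in> ZI c" using v unfolding ZI_nonneg_def by blast
  have pg: "pos g \<in> ZI c" using pos_ZI[OF gZ] unfolding ZI_nonneg_def by blast
  have ineq: "0 \<le> v x - g x \<and> 0 \<le> v x - pos g x" for x
  proof -
    have "conf (g x) ((v - w) x)" using g unfolding cleq_def by blast
    then have "conf (g x) (v x - w x)" by simp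
    moreover have "0 \<le> v x" "0 \<le> w x" using v w unfolding ZI_nonneg_def by blast+
    ultimately show ?thesis unfolding conf_def pos_def by auto
  qed
  have "\<forall>x. 0 \<le> (v - g) x" using ineq by simp
  then show "v - g \<in> ZI_nonneg c" using ZI_diff[OF vZ gZ] unfolding ZI_nonneg_def by blast
  have "\<forall>x. 0 \<le> (v - pos g) x" using ineq by simp
  then show "v - pos g \<in> ZI_nonneg c" using ZI_diff[OF vZ pg] unfolding ZI_nonneg_def by blast
qed

lemma markov:
  assumes u: "u \<in> ZI_nonneg c" and w: "w \<in> fiber c L u"
  shows "v \<in> fiber c L u \<Longrightarrow> (v, w) \<in> {(x, y). x \<in> fiber c L u \<and> y \<in> fiber c L u \<and> (x - y \<in> G \<or> y - x \<in> G)}\<^sup>*"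
proof (induction "nrm (v - w)" arbitrary: v rule: less_induct)
  case less
  let ?R = "{(x, y). x \<in> fiber c L u \<and> y \<in> fiber c L u \<and> (x - y \<in> G \<or> y - x \<in> G)}"
  show ?case
  proof (cases "v = w")
    case True then show ?thesis by simp
  next
    case False
    have vF: "v \<in> ZI_nonneg c" "u - v \<in> L" using less.prems unfolding fiber_def by blast+
    have wF: "w \<in> ZI_nonneg c" "u - w \<in> L" using w unfolding fiber_def by blast+
    have lL: "v - w \<in> L" using L_diff[OF wF(2) vF(2)] by (simp add: algebra_simps)
    have l0: "v - w \<noteq> 0" using False by simp
    obtain g where gG: "g \<in> G" and g: "cleq g (v - w)" using cover[OF lL l0] by blast
    have yN: "v - g \<in> ZI_nonneg c" using step_vec(1)[OF vF(1) wF(1) g gG] .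
    have e: "u - (v - g) = (u - v) + g" by (simp add: algebra_simps)
    have "(u - v) + g \<in> L" using L_add[OF vF(2)] gG GL by auto
    then have "u - (v - g) \<in> L" by (metis e)
    then have yF: "v - g \<in> fiber c L u" using yN unfolding fiber_def by blast
    have g0: "g \<noteq> 0" using gG G0 by blast
    have lZ: "v - w \<in> ZI c" using lL Lsub by blast
    have "nrm ((v - w) - g) < nrm (v - w)" by (rule nrm_less[OF lZ g g0])
    moreover have "(v - w) - g = (v - g) - w" by (simp add: algebra_simps)
    ultimately have lt1: "nrm ((v - g) - w) < nrm (v - w)" by simp
    have "(v - g, w) \<in> ?R\<^sup>*" by (rule less.hyps[OF lt1 yF])
    moreover have "v - (v - g) = g" by simp
    then have "(v, v - g) \<in> ?R" using less.prems yF gG by simp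
    ultimately show ?thesis by (rule converse_rtrancl_into_rtrancl[rotated])
  qed
qed

lemma generating: "gen_subgroup G = L"
proof
  show "gen_subgroup G \<subseteq> L" unfolding gen_subgroup_def using Lgrp GL by blast
  show "L \<subseteq> gen_subgroup G"
  proof
    fix l assume lL: "l \<in> L"
    show "l \<in> gen_subgroup G" unfolding gen_subgroup_def
    proof
      fix H assume H: "H \<in> {H. is_subgroup H \<and> G \<subseteq> H}"
      then have Hg: "is_subgroup H" and GH: "G \<subseteq> H" by auto
      have lZ: "l \<in> ZI c" using lL Lsub by blast
      have pN: "pos l \<in> ZI_nonneg c" and nN: "neg l \<in> ZI_nonneg c" using pos_ZI[OF lZ] neg_ZI[OF lZ] by auto
      have "l - l \<in> L" by (rule L_diff[OF lL lL])
      then have "pos l - pos l \<in> L" by simp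
      then have pF: "pos l \<in> fiber c L (pos l)" using pN unfolding fiber_def by blast
      have "pos l - neg l \<in> L" using lL pos_neg[of l] by simp
      then have nF: "neg l \<in> fiber c L (pos l)" using nN unfolding fiber_def by blast
      have path: "(pos l, neg l) \<in> {(x, y). x \<in> fiber c L (pos l) \<and> y \<in> fiber c L (pos l) \<and> (x - y \<in> G \<or> y - x \<in> G)}\<^sup>*"
        by (rule markov[OF pN nF pF])
      have "pos l - z \<in> H" if "(pos l, z) \<in> {(x, y). x \<in> fiber c L (pos l) \<and> y \<in> fiber c L (pos l) \<and> (x - y \<in> G \<or> y - x \<in> G)}\<^sup>*" for z
        using that
      proof (induction rule: rtrancl_induct)
        case base
        have "0 \<in> H" using Hg unfolding is_subgroup_def by blast
        then show ?case unfolding diff_self .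
      next
        case (step y z)
        then have "y - z \<in> G \<or> z - y \<in> G" by simp
        then have "y - z \<in> H"
        proof
          assume "z - y \<in> G"
          then have "- (z - y) \<in> H" using GH subgroup_uminus[OF Hg] by blast
          then show "y - z \<in> H" by simp
        qed (use GH in blast)
        then have "(pos l - y) + (y - z) \<in> H" using step.IH subgroup_add[OF Hg] by blast
        moreover have "(pos l - y) + (y - z) = pos l - z" by (simp add: algebra_simps)
        ultimately show ?case by metis
      qed
      from this[OF path] show "l \<in> H" using pos_neg[of l] by metis
    qed
  qed
qed

context
  fixes lt :: "vec \<Rightarrow> vec \<Rightarrow> bool"
  assumes to: "term_order c lt"
begin

lemmas TO = to[unfolded term_order_def]
lemma lt_in: "lt u v \<Longrightarrow> u \<in> ZI_nonneg c \<and> v \<in> ZI_nonneg c"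
  using TO[THEN conjunct1] by blast
lemma lt_irrefl: "\<not> lt u u"
  using TO[THEN conjunct2, THEN conjunct1] by blast
lemma lt_trans: "lt u v \<Longrightarrow> lt v w \<Longrightarrow> lt u w"
  using TO[THEN conjunct2, THEN conjunct2, THEN conjunct1] by blast
lemma lt_total: "u \<in> ZI_nonneg c \<Longrightarrow> v \<in> ZI_nonneg c \<Longrightarrow> u \<noteq> v \<Longrightarrow> lt u v \<or> lt v u"
  using TO[THEN conjunct2, THEN conjunct2, THEN conjunct2, THEN conjunct1] by blast
lemma lt_wf: "wfP lt"
  using TO[THEN conjunct2, THEN conjunct2, THEN conjunct2, THEN conjunct2, THEN conjunct1] by blast
lemma lt_add0: "lt u v \<Longrightarrow> w \<in> ZI_nonneg c \<Longrightarrow> lt (u + w) (v + w)"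
  using TO[THEN conjunct2, THEN conjunct2, THEN conjunct2, THEN conjunct2, THEN conjunct2] lt_in by blast
lemma lt_add: "lt u v \<Longrightarrow> w \<in> ZI_nonneg c \<Longrightarrow> lt (w + u) (w + v)"
proof -
  assume a: "lt u v" "w \<in> ZI_nonneg c"
  then have "lt (u + w) (v + w)" using lt_add0 by blast
  then show ?thesis by (simp add: add.commute)
qed

lemma pos_neg_ne: assumes "l \<noteq> 0" shows "pos l \<noteq> neg l"
proof
  assume a: "pos l = neg l"
  have "l x = 0" for x
  proof -
    have "pos l x = neg l x" using a by simp
    then have "max (l x) 0 = max (- l x) 0" by (simp add: pos_def neg_def)
    then show ?thesis by (auto simp: max_def split: if_splits)
  qed
  then have "l = 0" by (simp add: fun_eq_iff)
  then show False using assms by contradiction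
qed

lemma lt_asym: "lt a b \<Longrightarrow> lt b a \<Longrightarrow> False"
  using lt_trans lt_irrefl by blast

lemma lt_dich: "l \<in> ZI c \<Longrightarrow> l \<noteq> 0 \<Longrightarrow> \<not> lt (neg l) (pos l) \<Longrightarrow> lt (pos l) (neg l)"
proof -
  assume lZ: "l \<in> ZI c" and l0: "l \<noteq> 0" and n: "\<not> lt (neg l) (pos l)"
  have "lt (neg l) (pos l) \<or> lt (pos l) (neg l)"
    by (rule lt_total[OF neg_ZI[OF lZ] pos_ZI[OF lZ]]) (use pos_neg_ne[OF l0] in metis)
  then show ?thesis using n by blast
qed

lemma key:
  "l \<in> L \<Longrightarrow> l \<noteq> 0 \<Longrightarrow> lt (neg l) (pos l) \<Longrightarrow> \<exists>g\<in>G. cleq g l \<and> lt (neg g) (pos g)"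
proof (induction "nrm l" arbitrary: l rule: less_induct)
  case less
  obtain g where gG: "g \<in> G" and g: "cleq g l" using cover[OF less.prems(1,2)] by blast
  have gL: "g \<in> L" using gG GL by blast
  have gZ: "g \<in> ZI c" using gL Lsub by blast
  have g0: "g \<noteq> 0" using gG G0 by blast
  have lZ: "l \<in> ZI c" using less.prems(1) Lsub by blast
  show ?case
  proof (cases "lt (neg g) (pos g)")
    case True then show ?thesis using gG g by blast
  next
    case False
    then have gl: "lt (pos g) (neg g)" by (rule lt_dich[OF gZ g0])
    define l' where "l' = l - g"
    have l'L: "l' \<in> L" unfolding l'_def by (rule L_diff[OF less.prems(1) gL])
    have l'Z: "l' \<in> ZI c" using l'L Lsub by blast
    have l'0: "l' \<noteq> 0"
    proof
      assume "l' = 0"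
      then have "l = g" unfolding l'_def by simp
      then have "lt (pos l) (neg l)" using gl by simp
      then show False using lt_asym less.prems(3) by blast
    qed
    have pl: "pos l = pos l' + pos g" and nl: "neg l = neg l' + neg g"
      using cleq_pos[OF g] cleq_neg[OF g] unfolding l'_def by simp_all
    have "lt (neg l') (pos l')"
    proof (rule ccontr)
      assume "\<not> lt (neg l') (pos l')"
      then have a: "lt (pos l') (neg l')" by (rule lt_dich[OF l'Z l'0])
      have 1: "lt (pos g + pos l') (pos g + neg l')" using lt_add[OF a pos_ZI[OF gZ]] .
      have 2: "lt (neg l' + pos g) (neg l' + neg g)" using lt_add[OF gl neg_ZI[OF l'Z]] .
      have "pos g + neg l' = neg l' + pos g" by (rule add.commute)
      then have "lt (pos g + pos l') (neg l' + neg g)" using lt_trans[OF 1] 2 by metis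
      moreover have "pos g + pos l' = pos l" using pl by (simp add: add.commute)
      ultimately have "lt (pos l) (neg l)" using nl by metis
      then show False using lt_asym less.prems(3) by blast
    qed
    moreover have "nrm l' < nrm l" using nrm_less[OF lZ g g0] unfolding l'_def .
    ultimately obtain g' where g': "g' \<in> G" "cleq g' l'" "lt (neg g') (pos g')"
      using less.hyps[OF _ l'L l'0] by blast
    moreover have "cleq l' l" using cleq_diff[OF g] unfolding l'_def .
    ultimately have "cleq g' l" using cleq_trans by blast
    then show ?thesis using g' by blast
  qed
qed

lemma groebner:
  assumes u: "u \<in> ZI_nonneg c" and mF: "m \<in> fiber c L u"
    and mmin: "\<forall>v\<in>fiber c L u. v \<noteq> m \<longrightarrow> lt m v"
  shows "x \<in> fiber c L u \<Longrightarrow> (x, m) \<in> {(x, y). x \<in> fiber c L u \<and> y \<in> fiber c L u \<and> (x - y \<in> G \<or> y - x \<in> G) \<and> lt y x}\<^sup>*"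
  using lt_wf
proof (induction x rule: wfp_induct_rule)
  case (less x)
  let ?R = "{(x, y). x \<in> fiber c L u \<and> y \<in> fiber c L u \<and> (x - y \<in> G \<or> y - x \<in> G) \<and> lt y x}"
  show ?case
  proof (cases "x = m")
    case True then show ?thesis by simp
  next
    case False
    then have mx: "lt m x" using mmin less.prems by blast
    have xF: "x \<in> ZI_nonneg c" "u - x \<in> L" using less.prems unfolding fiber_def by blast+
    have mF': "m \<in> ZI_nonneg c" "u - m \<in> L" using mF unfolding fiber_def by blast+
    have xZ: "x \<in> ZI c" and x0: "\<forall>z. 0 \<le> x z" using xF(1) unfolding ZI_nonneg_def by blast+
    have m0: "\<forall>z. 0 \<le> m z" using mF'(1) unfolding ZI_nonneg_def by blast
    define l where "l = x - m"
    have "(u - m) - (u - x) \<in> L" by (rule L_diff[OF mF'(2) xF(2)])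
    moreover have "(u - m) - (u - x) = l" unfolding l_def by (simp add: algebra_simps)
    ultimately have lL: "l \<in> L" by metis
    have lZ: "l \<in> ZI c" using lL Lsub by blast
    have l0: "l \<noteq> 0" using False unfolding l_def by simp
    define k where "k = (\<lambda>z. min (x z) (m z))"
    have kN: "k \<in> ZI_nonneg c"
    proof -
      have "k \<in> ZI c"
      proof (rule ZI_sub_supp[OF xZ])
        fix z assume "k z \<noteq> 0"
        then show "x z \<noteq> 0" using x0 m0 unfolding k_def by (metis min.absorb_iff1 order.eq_iff)
      qed
      moreover have "\<forall>z. 0 \<le> k z" using x0 m0 unfolding k_def by simp
      ultimately show ?thesis unfolding ZI_nonneg_def by blast
    qed
    have xk: "x = k + pos l" and mk: "m = k + neg l"
      unfolding k_def l_def pos_def neg_def by (auto simp: fun_eq_iff min_def max_def)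
    have ln: "lt (neg l) (pos l)"
    proof (rule ccontr)
      assume "\<not> lt (neg l) (pos l)"
      then have "lt (pos l) (neg l)" by (rule lt_dich[OF lZ l0])
      then have "lt (k + pos l) (k + neg l)" by (rule lt_add[OF _ kN])
      then have "lt x m" using xk mk by metis
      then show False using mx lt_asym by blast
    qed
    obtain g where gG: "g \<in> G" and g: "cleq g l" and gl: "lt (neg g) (pos g)"
      using key[OF lL l0 ln] by blast
    have gl': "cleq g (x - m)" using g unfolding l_def .
    have yN: "x - g \<in> ZI_nonneg c" and wN: "x - pos g \<in> ZI_nonneg c"
      using step_vec[OF xF(1) mF'(1) gl' gG] by blast+
    have e: "u - (x - g) = (u - x) + g" by (simp add: algebra_simps)
    have "(u - x) + g \<in> L" using L_add[OF xF(2)] gG GL by blast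
    then have "u - (x - g) \<in> L" by (metis e)
    then have yF: "x - g \<in> fiber c L u" using yN unfolding fiber_def by blast
    have "lt ((x - pos g) + neg g) ((x - pos g) + pos g)" by (rule lt_add[OF gl wN])
    moreover have "(x - pos g) + neg g = x - g" using pos_neg[of g] by (simp add: algebra_simps)
    moreover have "(x - pos g) + pos g = x" by simp
    ultimately have yx: "lt (x - g) x" by metis
    have "(x - g, m) \<in> ?R\<^sup>*" by (rule less.IH[OF yx yF])
    moreover have "x - (x - g) = g" by simp
    then have "(x, x - g) \<in> ?R" using less.prems yF gG yx by simp
    ultimately show ?thesis by (rule converse_rtrancl_into_rtrancl[rotated])
  qed
qed

end

end



lemma act_zero: "\<sigma> \<in> Sym \<Longrightarrow> act \<sigma> b = 0 \<Longrightarrow> b = 0"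
proof -
  assume s: "\<sigma> \<in> Sym" and a: "act \<sigma> b = 0"
  have perm: "\<sigma> permutes {1..}" using s by (simp add: Sym_def)
  show "b = 0"
  proof (rule ext)
    fix x :: "nat \<times> nat"
    obtain i j where x: "x = (i, j)" by (cases x)
    have "act \<sigma> b (\<sigma> i, j) = b (i, j)" unfolding act_def using permutes_inverses(2)[OF perm] by simp
    moreover have "act \<sigma> b (\<sigma> i, j) = 0" using a by simp
    ultimately show "b x = 0 x" using x by simp
  qed
qed

lemma orbit_sub: assumes "sym_invariant L" "B \<subseteq> L" shows "sym_orbit B \<subseteq> L"
proof
  fix g assume "g \<in> sym_orbit B"
  then obtain \<sigma> b where g: "g = act \<sigma> b" and s: "\<sigma> \<in> Sym" and b: "b \<in> B" unfolding sym_orbit_def by blast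
  have "b \<in> L" using b assms(2) by blast
  then show "g \<in> L" using assms(1) s g unfolding sym_invariant_def by blast
qed

lemma orbit_I: "\<sigma> \<in> Sym \<Longrightarrow> b \<in> B \<Longrightarrow> act \<sigma> b \<in> sym_orbit B"
  unfolding sym_orbit_def by blast

theorem corollary4p3:
  fixes c :: nat and L :: "vec set"
  assumes "1 \<le> c" and "is_lattice c L" and "sym_invariant L"
  shows "(\<exists>B. finite B \<and> is_universal_groebner_basis c L (sym_orbit B))
       \<and> (\<forall>lt. term_order c lt \<longrightarrow> (\<exists>B. finite B \<and> is_groebner_basis c lt L (sym_orbit B)))
       \<and> (\<exists>B. finite B \<and> is_markov_basis c L (sym_orbit B))
       \<and> (\<exists>B. finite B \<and> is_generating_set c L (sym_orbit B))"
proof -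
  have Lsub: "L \<subseteq> ZI c" and Lgrp: "is_subgroup L" using assms(2) unfolding is_lattice_def by blast+
  have af: "afull (\<lambda>u v. \<exists>\<sigma>\<in>Sym. cleq (act \<sigma> u) v) (L - {0})"
  proof (rule af_map[OF wqo_ZI[of c], of _ id])
    fix x assume "x \<in> L - {0}" then show "id x \<in> ZI c" using Lsub by auto
  next
    fix x y assume "\<exists>\<sigma>\<in>Sym. cleq (act \<sigma> (id x)) (id y)"
    then show "\<exists>\<sigma>\<in>Sym. cleq (act \<sigma> x) y" by simp
  qed
  obtain B where B: "finite B" "B \<subseteq> L - {0}"
    and Bc: "\<forall>s\<in>L - {0}. \<exists>b\<in>B. \<exists>\<sigma>\<in>Sym. cleq (act \<sigma> b) s"
    using finite_basis[OF af] by blast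
  define G where "G = sym_orbit B"
  have BL: "B \<subseteq> L" using B(2) by blast
  have GL: "G \<subseteq> L" unfolding G_def by (rule orbit_sub[OF assms(3) BL])
  have G0: "0 \<notin> G"
  proof
    assume "0 \<in> G"
    then obtain \<sigma> b where s: "\<sigma> \<in> Sym" and b: "b \<in> B" and e: "0 = act \<sigma> b" unfolding G_def sym_orbit_def by blast
    have "b = 0" using act_zero[OF s e[symmetric]] .
    then show False using b B(2) by blast
  qed
  have cover: "\<exists>g\<in>G. cleq g l" if "l \<in> L" "l \<noteq> 0" for l
  proof -
    have "l \<in> L - {0}" using that by blast
    then obtain b \<sigma> where "b \<in> B" "\<sigma> \<in> Sym" "cleq (act \<sigma> b) l" using Bc by blast
    then show ?thesis unfolding G_def using orbit_I by blast
  qed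
  interpret S: setting c L G
    by (unfold_locales) (fact Lsub, fact Lgrp, fact GL, fact G0, fact cover)
  have gb: "is_groebner_basis c lt L G" if lt: "term_order c lt" for lt
    unfolding is_groebner_basis_def
  proof (intro conjI ballI impI)
    show "G \<subseteq> L" by (rule GL)
    fix u m assume u: "u \<in> ZI_nonneg c" and m: "m \<in> fiber c L u"
      and mm: "\<forall>v\<in>fiber c L u. v \<noteq> m \<longrightarrow> lt m v"
    have "0 \<in> L" using Lgrp unfolding is_subgroup_def by blast
    then have "u - u \<in> L" by simp
    then have "u \<in> fiber c L u" using u unfolding fiber_def by blast
    then show "(u, m) \<in> {(x, y). x \<in> fiber c L u \<and> y \<in> fiber c L u \<and> (x - y \<in> G \<or> y - x \<in> G) \<and> lt y x}\<^sup>*"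
      by (rule S.groebner[OF lt u m mm])
  qed
  have mk: "is_markov_basis c L G"
    unfolding is_markov_basis_def
  proof (intro conjI ballI)
    show "G \<subseteq> L" by (rule GL)
    fix u v w assume u: "u \<in> ZI_nonneg c" and v: "v \<in> fiber c L u" and w: "w \<in> fiber c L u"
    show "(v, w) \<in> {(x, y). x \<in> fiber c L u \<and> y \<in> fiber c L u \<and> (x - y \<in> G \<or> y - x \<in> G)}\<^sup>*"
      by (rule S.markov[OF u w v])
  qed
  have gen: "is_generating_set c L G"
    unfolding is_generating_set_def using GL S.generating by blast
  have 1: "is_universal_groebner_basis c L G"
    unfolding is_universal_groebner_basis_def using gb by blast
  show ?thesis
  proof (intro conjI allI impI)
    show "\<exists>B. finite B \<and> is_universal_groebner_basis c L (sym_orbit B)"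
      using 1 B(1) unfolding G_def by blast
    fix lt assume "term_order c lt"
    then show "\<exists>B. finite B \<and> is_groebner_basis c lt L (sym_orbit B)"
      using gb B(1) unfolding G_def by blast
  next
    show "\<exists>B. finite B \<and> is_markov_basis c L (sym_orbit B)"
      using mk B(1) unfolding G_def by blast
    show "\<exists>B. finite B \<and> is_generating_set c L (sym_orbit B)"
      using gen B(1) unfolding G_def by blast
  qed
qed

end
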